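(* Fix an integer $n\ge1$. In the $q$-shuffle algebra $\mathbb V$ define the following sets, where $i,j\in\mathbb N$: $$N=\{\tilde G_i\star G_j: i+j=n\},\qquad S=\{G_i\star\tilde G_j: i+j=n\},$$ $$E=\{W_{i+1}\star W_{-j}: i+j=n-1\},\qquad W=\{W_{-i}\star W_{j+1}: i+j=n-1\}.$$ Then the sets $N\cup E$, $N\cup W$, $S\cup E$, $S\cup W$ all have the same linear span.
   Context: Let $\mathbb F$ be a field and let $q\in\mathbb F$ be nonzero and not a root of unity. Let $\mathbb V$ be the free associative $\mathbb F$-algebra on noncommuting $x,y$, with basis the words (including $1$). Juxtaposition denotes concatenation. Set $\langle x,x\rangle=\langle y,y\rangle=2$ and $\langle x,y\rangle=\langle y,x\rangle=-2$. The $q$-shuffle product $\star$ is the bilinear product determined as follows: - $1\star v=v\star 1=v$; - for nontrivial words $u=u_1\cdots u_r$ and $v=v_1\cdots v_s$, $$u\star v=u_1((u_2\cdots u_r)\star v)+v_1(u\star(v_2\cdots v_s))q^{\langle u_1,v_1\rangle+\cdots+\langle u_r,v_1\rangle}.$$ This makes $\mathbb V$ an associative algebra, the $q$-shuffle algebra. For $k\in\mathbb N$: - $W_{-k}=xyx\cdots x$ is the alternating word of length $2k+1$ beginning and ending with $x$; - $W_{k+1}=yxy\cdots y$ is the alternating word of length $2k+1$ beginning and ending with $y$; - $G_k=yxyx\cdots yx$ is the word of length $2k$; - $\tilde G_k=xyxy\cdots xy$ is the word of length $2k$; - $G_0=\tilde G_0=1$. *)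

theory Defs
  imports Complex_Main "HOL-Library.Function_Algebras"
begin

datatype letter = X | Y

type_synonym word = "letter list"

text \<open>Elements of V are represented as coefficient functions on words
  (all elements arising below are finitely supported).\<close>
type_synonym 'k vec = "word \<Rightarrow> 'k"

definition basis :: "word \<Rightarrow> 'k::field vec" where
  "basis u = (\<lambda>w. if w = u then 1 else 0)"

text \<open>Left concatenation by a letter, extended linearly: a(\<Sum> c_w w) = \<Sum> c_w (a w).\<close>
definition lpre :: "letter \<Rightarrow> 'k::field vec \<Rightarrow> 'k vec" where
  "lpre a f = (\<lambda>w. case w of [] \<Rightarrow> 0 | b # w' \<Rightarrow> (if b = a then f w' else 0))"

fun ip :: "letter \<Rightarrow> letter \<Rightarrow> int" where
  "ip a b = (if a = b then 2 else -2)"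

fun qsh :: "'k::field \<Rightarrow> word \<Rightarrow> word \<Rightarrow> 'k vec" where
  "qsh q [] v = basis v"
| "qsh q u [] = basis u"
| "qsh q (a # u) (b # v) =
     (\<lambda>w. lpre a (qsh q u (b # v)) w
        + q powi (sum_list (map (\<lambda>c. ip c b) (a # u))) * lpre b (qsh q (a # u) v) w)"

fun altw :: "letter \<Rightarrow> nat \<Rightarrow> word" where
  "altw a 0 = []"
| "altw a (Suc m) = a # altw (if a = X then Y else X) m"

definition Wm :: "nat \<Rightarrow> word" where "Wm k = altw X (2 * k + 1)"   \<comment> \<open>W_{-k}\<close>
definition Wp :: "nat \<Rightarrow> word" where "Wp k = altw Y (2 * k + 1)"   \<comment> \<open>W_{k+1}\<close>
definition G :: "nat \<Rightarrow> word" where "G k = altw Y (2 * k)"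
definition Gt :: "nat \<Rightarrow> word" where "Gt k = altw X (2 * k)"

definition vspan :: "'k::field vec set \<Rightarrow> 'k vec set" where
  "vspan A = module.span (\<lambda>c f w. c * f w) A"

end

theory Submission
  imports Defs
begin

fun fl :: "letter \<Rightarrow> letter" where "fl X = Y" | "fl Y = X"

lemma altw_Suc: "altw a (Suc m) = a # altw (fl a) m"
  by (cases a) auto

lemma sum_ip_altw: "sum_list (map (\<lambda>c. ip c b) (altw a m)) = (if even m then 0 else ip a b)"
proof (induction m arbitrary: a)
  case 0 then show ?case by simp
next
  case (Suc m) then show ?case by (cases a; cases b) (auto simp: altw_Suc)
qed

lemma basis_Cons: "basis v (c # w) = (case v of [] \<Rightarrow> 0 | b # v' \<Rightarrow> if c = b then basis v' w else 0)"
  by (cases v) (auto simp: basis_def)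

lemma qsh_Nil2[simp]: "qsh q u [] = basis u"
  by (cases u) auto

lemma qsh_Cons: "qsh q u v (c # w) =
   (case u of [] \<Rightarrow> 0 | a # u' \<Rightarrow> if c = a then qsh q u' v w else 0)
 + (case v of [] \<Rightarrow> 0 | b # v' \<Rightarrow> if c = b then q powi (sum_list (map (\<lambda>d. ip d b) u)) * qsh q u v' w else 0)"
proof (cases u)
  case Nil then show ?thesis by (cases v) (auto simp: basis_def)
next
  case (Cons a u')
  then show ?thesis by (cases v) (auto simp: basis_def lpre_def)
qed

lemma qsh_Nil_w: "qsh q u v [] = (if u = [] \<and> v = [] then 1 else 0)"
  by (cases u; cases v) (auto simp: basis_def lpre_def)

lemma qsh_len: "length w \<noteq> length u + length v \<Longrightarrow> qsh q u v w = 0"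
proof (induction w arbitrary: u v)
  case Nil then show ?case by (auto simp: qsh_Nil_w)
next
  case (Cons c w)
  show ?case
    unfolding qsh_Cons using Cons by (auto split: list.splits simp del: qsh.simps simp: basis_def)
qed

definition PP :: "'k::field \<Rightarrow> letter \<Rightarrow> nat \<Rightarrow> letter \<Rightarrow> nat \<Rightarrow> 'k vec" where
  "PP q a m b l = qsh q (altw a m) (altw b l)"

lemma length_altw[simp]: "length (altw a m) = m"
  by (induction m arbitrary: a) auto

lemma PP_len: "length w \<noteq> m + l \<Longrightarrow> PP q a m b l w = 0"
  unfolding PP_def by (rule qsh_len) simp

lemma PP_Cons: "PP q a m b l (c # w) =
   (if 0 < m \<and> c = a then PP q (fl a) (m - 1) b l w else 0)
 + (if 0 < l \<and> c = b then q powi (if even m then 0 else ip a b) * PP q a m (fl b) (l - 1) w else 0)"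
proof (cases m)
  case 0 then show ?thesis by (cases l; cases b) (auto simp: PP_def basis_def altw_Suc)
next
  case (Suc m')
  show ?thesis
  proof (cases l)
    case 0 then show ?thesis using Suc by (cases a) (auto simp: PP_def basis_def altw_Suc)
  next
    case (Suc l')
    have e: "sum_list (map (\<lambda>d. ip d b) (a # altw (fl a) m')) = (if even m then 0 else ip a b)"
      using sum_ip_altw[of b a m] \<open>m = Suc m'\<close> by (simp only: altw_Suc)
    show ?thesis using \<open>m = Suc m'\<close> Suc unfolding PP_def
      by (simp only: altw_Suc qsh_Cons list.case e) (simp del: qsh.simps ip.simps)
  qed
qed

lemma PP_0_left: "PP q a 0 b l = basis (altw b l)" by (simp add: PP_def)
lemma PP_0_right: "PP q a m b 0 = basis (altw a m)" by (simp add: PP_def)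

lemma diff_SS: "(l::nat) - Suc (Suc 0) = l - 2" by arith

lemma XY_xy: "PP q X m Y l (X # Y # w) = (if 2 \<le> m then PP q X (m-2) Y l w else 0)
   + (if 1 \<le> m \<and> 1 \<le> l then q powi (if even m then 2 else 0) * PP q Y (m-1) X (l-1) w else 0)"
  by (cases m; cases l) (auto simp: PP_Cons diff_diff_left)

lemma XY_yx: assumes "q \<noteq> 0" shows "PP q X m Y l (Y # X # w) =
   (if 1 \<le> m \<and> 1 \<le> l then q powi (if even m then 0 else -2) * PP q Y (m-1) X (l-1) w else 0)
   + (if 2 \<le> l then PP q X m Y (l-2) w else 0)"
  using assms by (auto simp: PP_Cons algebra_simps power_int_add[symmetric] diff_diff_left diff_SS)

lemma YX_yx: "PP q Y l X m (Y # X # w) = (if 2 \<le> l then PP q Y (l-2) X m w else 0)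
   + (if 1 \<le> l \<and> 1 \<le> m then q powi (if even l then 2 else 0) * PP q X (l-1) Y (m-1) w else 0)"
  by (cases m; cases l) (auto simp: PP_Cons diff_diff_left)

lemma YX_xy: assumes "q \<noteq> 0" shows "PP q Y l X m (X # Y # w) =
   (if 1 \<le> l \<and> 1 \<le> m then q powi (if even l then 0 else -2) * PP q X (l-1) Y (m-1) w else 0)
   + (if 2 \<le> m then PP q Y l X (m-2) w else 0)"
  using assms by (auto simp: PP_Cons algebra_simps power_int_add[symmetric] diff_diff_left diff_SS)

lemma XY_xx: "PP q X m Y l (X # X # w) = 0" by (auto simp: PP_Cons diff_diff_left)
lemma XY_yy: "PP q X m Y l (Y # Y # w) = 0" by (auto simp: PP_Cons diff_diff_left)
lemma YX_xx: "PP q Y m X l (X # X # w) = 0" by (auto simp: PP_Cons diff_diff_left)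
lemma YX_yy: "PP q Y m X l (Y # Y # w) = 0" by (auto simp: PP_Cons diff_diff_left)

lemma two_m1: "0 < p \<Longrightarrow> 2 * p - Suc 0 = Suc (2 * (p - Suc 0))" for p :: nat by arith
lemma two_m2: "2 * p - 2 = 2 * (p - 1)" for p :: nat by arith

lemma XYee_xy: "PP q X (2*p) Y (2*k) (X#Y#w) = (if p = 0 then 0 else PP q X (2*(p-1)) Y (2*k) w
    + (if k = 0 then 0 else q^2 * PP q Y (2*(p-1)+1) X (2*(k-1)+1) w))"
  by (simp add: XY_xy two_m1 two_m2)

lemma XYee_yx: assumes "q \<noteq> 0" shows "PP q X (2*p) Y (2*k) (Y#X#w) = (if k = 0 then 0 else PP q X (2*p) Y (2*(k-1)) w
    + (if p = 0 then 0 else PP q Y (2*(p-1)+1) X (2*(k-1)+1) w))"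
  using assms by (simp add: XY_yx two_m1 two_m2)

lemma XYoo_xy: "PP q X (2*p+1) Y (2*k+1) (X#Y#w) = (if p = 0 then 0 else PP q X (2*(p-1)+1) Y (2*k+1) w)
    + PP q Y (2*p) X (2*k) w"
  by (simp add: XY_xy two_m1 two_m2)

lemma XYoo_yx: assumes "q \<noteq> 0" shows "PP q X (2*p+1) Y (2*k+1) (Y#X#w) = q powi -2 * PP q Y (2*p) X (2*k) w
    + (if k = 0 then 0 else PP q X (2*p+1) Y (2*(k-1)+1) w)"
  using assms by (simp add: XY_yx two_m1 two_m2)

lemma YXee_xy: assumes "q \<noteq> 0" shows "PP q Y (2*p) X (2*k) (X#Y#w) = (if k = 0 then 0 else PP q Y (2*p) X (2*(k-1)) w
    + (if p = 0 then 0 else PP q X (2*(p-1)+1) Y (2*(k-1)+1) w))"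
  using assms by (simp add: YX_xy two_m1 two_m2)

lemma YXee_yx: "PP q Y (2*p) X (2*k) (Y#X#w) = (if p = 0 then 0 else PP q Y (2*(p-1)) X (2*k) w
    + (if k = 0 then 0 else q^2 * PP q X (2*(p-1)+1) Y (2*(k-1)+1) w))"
  by (simp add: YX_yx two_m1 two_m2)

lemma YXoo_xy: assumes "q \<noteq> 0" shows "PP q Y (2*p+1) X (2*k+1) (X#Y#w) = q powi -2 * PP q X (2*p) Y (2*k) w
    + (if k = 0 then 0 else PP q Y (2*p+1) X (2*(k-1)+1) w)"
  using assms by (simp add: YX_xy two_m1 two_m2)

lemma YXoo_yx: "PP q Y (2*p+1) X (2*k+1) (Y#X#w) = (if p = 0 then 0 else PP q Y (2*(p-1)+1) X (2*k+1) w)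
    + PP q X (2*p) Y (2*k) w"
  by (simp add: YX_yx two_m1 two_m2)

definition aa :: "'k::field \<Rightarrow> nat \<Rightarrow> nat \<Rightarrow> word \<Rightarrow> 'k" where
  "aa q i j w = PP q X (2*i+1) Y (2*j+1) w - PP q Y (2*j+1) X (2*i+1) w
    - (1 - q powi -2) * (\<Sum>k\<le>i. PP q X (2*(i+j+1-k)) Y (2*k) w - PP q X (2*k) Y (2*(i+j+1-k)) w)"

definition bb :: "'k::field \<Rightarrow> nat \<Rightarrow> nat \<Rightarrow> word \<Rightarrow> 'k" where
  "bb q i j w = PP q Y (2*i) X (2*j) w - PP q X (2*j) Y (2*i) w
    - (q^2 - 1) * (\<Sum>k<i. PP q Y (2*(i+j-1-k)+1) X (2*k+1) w - PP q Y (2*k+1) X (2*(i+j-1-k)+1) w)"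

lemma qinv: "q \<noteq> 0 \<Longrightarrow> q powi -2 * q^2 = (1::'k::field)"
  by (simp add: power_int_minus field_simps)

lemma qinv2: "q \<noteq> 0 \<Longrightarrow> q^2 * (q powi -2 * z) = (z::'k::field)"
  by (simp add: power_int_minus field_simps)
lemma qinv3: "q \<noteq> 0 \<Longrightarrow> q powi -2 * (q^2 * z) = (z::'k::field)"
  by (simp add: power_int_minus field_simps)

lemma R1: assumes q: "q \<noteq> 0" shows "aa q (Suc i) j (X#Y#w) = aa q i j w + bb q (Suc i) j w"
proof -
  define E where "E p k = PP q X (2*p) Y (2*k) w" for p k
  define Od where "Od p k = PP q Y (2*p+1) X (2*k+1) w" for p k
  define g where "g k = (if k = 0 then E (i+j+1) 0 else E (i+j+1-k) k + q^2 * Od (i+j+1-k) (k-1) - E (k-1) (i+j+2-k) - q^2 * Od (k-1) (i+j+1-k))" for k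
  have f: "PP q X (2*(Suc i+j+1-k)) Y (2*k) (X#Y#w) - PP q X (2*k) Y (2*(Suc i+j+1-k)) (X#Y#w) = g k"
    if "k \<le> Suc i" for k
    using that unfolding g_def XYee_xy[of q "Suc i+j+1-k" k w] XYee_xy[of q k "Suc i+j+1-k" w]
    by (auto simp: E_def Od_def Suc_diff_le)
  have s1: "(\<Sum>k\<le>Suc i. PP q X (2*(Suc i+j+1-k)) Y (2*k) (X#Y#w) - PP q X (2*k) Y (2*(Suc i+j+1-k)) (X#Y#w))
      = E (i+j+1) 0 + (\<Sum>k\<le>i. E (i+j-k) (Suc k) + q^2 * Od (i+j-k) k - E k (i+j+1-k) - q^2 * Od k (i+j-k))"
  proof -
    have "(\<Sum>k\<le>Suc i. PP q X (2*(Suc i+j+1-k)) Y (2*k) (X#Y#w) - PP q X (2*k) Y (2*(Suc i+j+1-k)) (X#Y#w))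
       = (\<Sum>k\<le>Suc i. g k)" by (intro sum.cong refl f) simp
    also have "\<dots> = g 0 + (\<Sum>k\<le>i. g (Suc k))" by (rule sum.atMost_Suc_shift)
    also have "\<dots> = E (i+j+1) 0 + (\<Sum>k\<le>i. E (i+j-k) (Suc k) + q^2 * Od (i+j-k) k - E k (i+j+1-k) - q^2 * Od k (i+j-k))"
      by (auto simp: g_def Suc_diff_le intro!: sum.cong)
    finally show ?thesis .
  qed
  have s2: "E (i+j+1) 0 + (\<Sum>k\<le>i. E (i+j-k) (Suc k)) = (\<Sum>k\<le>i. E (i+j+1-k) k) + E j (Suc i)"
  proof -
    have "E (i+j+1) 0 + (\<Sum>k\<le>i. E (i+j-k) (Suc k)) = (\<Sum>k\<le>Suc i. E (i+j+1-k) k)"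
      by (subst sum.atMost_Suc_shift) simp
    also have "\<dots> = (\<Sum>k\<le>i. E (i+j+1-k) k) + E j (Suc i)" by simp
    finally show ?thesis .
  qed
  have s3: "(\<Sum>k\<le>Suc i. PP q X (2*(Suc i+j+1-k)) Y (2*k) (X#Y#w) - PP q X (2*k) Y (2*(Suc i+j+1-k)) (X#Y#w))
     = (\<Sum>k\<le>i. E (i+j+1-k) k - E k (i+j+1-k)) + E j (Suc i) + q^2 * (\<Sum>k<Suc i. Od (Suc i+j-1-k) k - Od k (Suc i+j-1-k))"
    unfolding s1 lessThan_Suc_atMost using s2
    by (simp add: sum.distrib sum_subtractf sum_distrib_left algebra_simps)
  have t1: "PP q X (2*Suc i+1) Y (2*j+1) (X#Y#w) = PP q X (2*i+1) Y (2*j+1) w + PP q Y (2*Suc i) X (2*j) w"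
    unfolding XYoo_xy[of q "Suc i" j w] by simp
  have t2: "PP q Y (2*j+1) X (2*Suc i+1) (X#Y#w) = q powi -2 * E j (Suc i) + PP q Y (2*j+1) X (2*i+1) w"
    unfolding YXoo_xy[OF q, of j "Suc i" w] by (simp add: E_def)
  show ?thesis
    unfolding aa_def bb_def s3 t1 t2
    using qinv[OF q]
    by (simp add: E_def Od_def algebra_simps qinv2[OF q] qinv3[OF q])
qed

lemma R2: assumes q: "q \<noteq> 0" shows "aa q i (Suc j) (Y#X#w) = aa q i j w + q powi -2 * bb q i (Suc j) w"
proof -
  define E where "E p k = PP q X (2*p) Y (2*k) w" for p k
  define Od where "Od p k = PP q Y (2*p+1) X (2*k+1) w" for p k
  define g where "g k = (if k = 0 then 0 - E 0 (i+j+1) else E (i+j+2-k) (k-1) + Od (i+j+1-k) (k-1) - Od (k-1) (i+j+1-k) - E k (i+j+1-k))" for k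
  have f: "PP q X (2*(i+Suc j+1-k)) Y (2*k) (Y#X#w) - PP q X (2*k) Y (2*(i+Suc j+1-k)) (Y#X#w) = g k"
    if "k \<le> i" for k
    using that unfolding g_def XYee_yx[OF q, of "i+Suc j+1-k" k w] XYee_yx[OF q, of k "i+Suc j+1-k" w]
    by (auto simp: E_def Od_def Suc_diff_le)
  have s1: "(\<Sum>k\<le>i. PP q X (2*(i+Suc j+1-k)) Y (2*k) (Y#X#w) - PP q X (2*k) Y (2*(i+Suc j+1-k)) (Y#X#w))
      = 0 - E 0 (i+j+1) + (\<Sum>k<i. E (i+j+1-k) k + Od (i+j-k) k - Od k (i+j-k) - E (Suc k) (i+j-k))"
  proof -
    have "(\<Sum>k\<le>i. PP q X (2*(i+Suc j+1-k)) Y (2*k) (Y#X#w) - PP q X (2*k) Y (2*(i+Suc j+1-k)) (Y#X#w))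
       = (\<Sum>k\<le>i. g k)" by (intro sum.cong refl f) simp
    also have "\<dots> = g 0 + (\<Sum>k<i. g (Suc k))" by (rule sum.atMost_shift)
    also have "\<dots> = 0 - E 0 (i+j+1) + (\<Sum>k<i. E (i+j+1-k) k + Od (i+j-k) k - Od k (i+j-k) - E (Suc k) (i+j-k))"
      by (auto simp: g_def Suc_diff_le intro!: sum.cong)
    finally show ?thesis .
  qed
  have s2a: "(\<Sum>k\<le>i. E (i+j+1-k) k) = (\<Sum>k<i. E (i+j+1-k) k) + E (Suc j) i"
    unfolding lessThan_Suc_atMost[symmetric] by simp
  have s2b: "(\<Sum>k\<le>i. E k (i+j+1-k)) = E 0 (i+j+1) + (\<Sum>k<i. E (Suc k) (i+j-k))"
    by (subst sum.atMost_shift) simp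
  have s3: "(\<Sum>k\<le>i. PP q X (2*(i+Suc j+1-k)) Y (2*k) (Y#X#w) - PP q X (2*k) Y (2*(i+Suc j+1-k)) (Y#X#w))
     = (\<Sum>k\<le>i. E (i+j+1-k) k - E k (i+j+1-k)) - E (Suc j) i + (\<Sum>k<i. Od (i+Suc j-1-k) k - Od k (i+Suc j-1-k))"
    unfolding s1 sum_subtractf[of _ _ "{..i}"] s2a s2b
    by (simp add: sum.distrib sum_subtractf algebra_simps)
  have t1: "PP q X (2*i+1) Y (2*Suc j+1) (Y#X#w) = q powi -2 * PP q Y (2*i) X (2*Suc j) w + PP q X (2*i+1) Y (2*j+1) w"
    unfolding XYoo_yx[OF q, of i "Suc j" w] by simp
  have t2: "PP q Y (2*Suc j+1) X (2*i+1) (Y#X#w) = PP q Y (2*j+1) X (2*i+1) w + E (Suc j) i"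
    unfolding YXoo_yx[of q "Suc j" i w] by (simp add: E_def)
  show ?thesis
    unfolding aa_def bb_def s3 t1 t2
    using qinv[OF q]
    by (simp add: E_def Od_def algebra_simps qinv2[OF q] qinv3[OF q])
qed

lemma R3: assumes q: "q \<noteq> 0" shows "bb q (Suc i) (Suc j) (X#Y#w) = aa q i j w + bb q (Suc i) j w"
proof -
  define E where "E p k = PP q X (2*p) Y (2*k) w" for p k
  define Od where "Od p k = PP q Y (2*p+1) X (2*k+1) w" for p k
  define g where "g k = q powi -2 * E (i+j+1-k) k + (if k = 0 then 0 else Od (i+j+1-k) (k-1)) - q powi -2 * E k (i+j+1-k) - Od k (i+j-k)" for k
  have f: "PP q Y (2*(Suc i+Suc j-1-k)+1) X (2*k+1) (X#Y#w) - PP q Y (2*k+1) X (2*(Suc i+Suc j-1-k)+1) (X#Y#w) = g k"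
    if "k < Suc i" for k
    using that unfolding g_def YXoo_xy[OF q, of "Suc i+Suc j-1-k" k w] YXoo_xy[OF q, of k "Suc i+Suc j-1-k" w]
    by (auto simp: E_def Od_def Suc_diff_le)
  have s1: "(\<Sum>k<Suc i. PP q Y (2*(Suc i+Suc j-1-k)+1) X (2*k+1) (X#Y#w) - PP q Y (2*k+1) X (2*(Suc i+Suc j-1-k)+1) (X#Y#w))
      = (\<Sum>k\<le>i. g k)"
    unfolding lessThan_Suc_atMost[symmetric] by (intro sum.cong refl f) simp
  have s2: "(\<Sum>k\<le>i. (if k = 0 then 0 else Od (i+j+1-k) (k-1))) = (\<Sum>k<i. Od (i+j-k) k)"
    by (subst sum.atMost_shift) simp
  have s2b: "(\<Sum>k<Suc i. Od (Suc i+j-1-k) k) = (\<Sum>k<i. Od (i+j-k) k) + Od j i"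
    by simp
  have s3: "(\<Sum>k<Suc i. PP q Y (2*(Suc i+Suc j-1-k)+1) X (2*k+1) (X#Y#w) - PP q Y (2*k+1) X (2*(Suc i+Suc j-1-k)+1) (X#Y#w))
     = q powi -2 * (\<Sum>k\<le>i. E (i+j+1-k) k - E k (i+j+1-k)) + (\<Sum>k<Suc i. Od (Suc i+j-1-k) k - Od k (Suc i+j-1-k)) - Od j i"
    apply (subst s1)
    apply (simp only: g_def[abs_def] sum.distrib sum_subtractf sum_distrib_left s2 s2b)
    apply (simp add: lessThan_Suc_atMost algebra_simps sum_distrib_left)
    done
  have t1: "PP q Y (2*Suc i) X (2*Suc j) (X#Y#w) = PP q Y (2*Suc i) X (2*j) w + PP q X (2*i+1) Y (2*j+1) w"
    unfolding YXee_xy[OF q, of "Suc i" "Suc j" w] by simp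
  have t2: "PP q X (2*Suc j) Y (2*Suc i) (X#Y#w) = E j (Suc i) + q^2 * Od j i"
    unfolding XYee_xy[of q "Suc j" "Suc i" w] by (simp add: E_def Od_def)
  show ?thesis
    unfolding aa_def bb_def s3 t1 t2
    using qinv[OF q]
    by (simp add: E_def Od_def algebra_simps qinv2[OF q] qinv3[OF q])
qed

lemma R4: assumes q: "q \<noteq> 0" shows "bb q (Suc i) (Suc j) (Y#X#w) = q^2 * aa q i j w + bb q i (Suc j) w"
proof -
  define E where "E p k = PP q X (2*p) Y (2*k) w" for p k
  define Od where "Od p k = PP q Y (2*p+1) X (2*k+1) w" for p k
  define g where "g k = Od (i+j-k) k + E (i+j+1-k) k - (if k = 0 then 0 else Od (k-1) (i+j+1-k)) - E k (i+j+1-k)" for k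
  have f: "PP q Y (2*(Suc i+Suc j-1-k)+1) X (2*k+1) (Y#X#w) - PP q Y (2*k+1) X (2*(Suc i+Suc j-1-k)+1) (Y#X#w) = g k"
    if "k < Suc i" for k
    using that unfolding g_def YXoo_yx[of q "Suc i+Suc j-1-k" k w] YXoo_yx[of q k "Suc i+Suc j-1-k" w]
    by (auto simp: E_def Od_def Suc_diff_le)
  have s1: "(\<Sum>k<Suc i. PP q Y (2*(Suc i+Suc j-1-k)+1) X (2*k+1) (Y#X#w) - PP q Y (2*k+1) X (2*(Suc i+Suc j-1-k)+1) (Y#X#w))
      = (\<Sum>k\<le>i. g k)"
    unfolding lessThan_Suc_atMost[symmetric] by (intro sum.cong refl f) simp
  have s2: "(\<Sum>k\<le>i. (if k = 0 then 0 else Od (k-1) (i+j+1-k))) = (\<Sum>k<i. Od k (i+j-k))"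
    by (subst sum.atMost_shift) simp
  have s2b: "(\<Sum>k\<le>i. Od (i+j-k) k) = (\<Sum>k<i. Od (i+j-k) k) + Od j i"
    unfolding lessThan_Suc_atMost[symmetric] by simp
  have s3: "(\<Sum>k<Suc i. PP q Y (2*(Suc i+Suc j-1-k)+1) X (2*k+1) (Y#X#w) - PP q Y (2*k+1) X (2*(Suc i+Suc j-1-k)+1) (Y#X#w))
     = (\<Sum>k\<le>i. E (i+j+1-k) k - E k (i+j+1-k)) + (\<Sum>k<i. Od (i+Suc j-1-k) k - Od k (i+Suc j-1-k)) + Od j i"
    apply (subst s1)
    apply (simp only: g_def[abs_def] sum.distrib sum_subtractf s2 s2b)
    apply (simp add: algebra_simps)
    done
  have t1: "PP q Y (2*Suc i) X (2*Suc j) (Y#X#w) = PP q Y (2*i) X (2*Suc j) w + q^2 * PP q X (2*i+1) Y (2*j+1) w"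
    unfolding YXee_yx[of q "Suc i" "Suc j" w] by simp
  have t2: "PP q X (2*Suc j) Y (2*Suc i) (Y#X#w) = PP q X (2*Suc j) Y (2*i) w + Od j i"
    unfolding XYee_yx[OF q, of "Suc j" "Suc i" w] by (simp add: Od_def)
  show ?thesis
    unfolding aa_def bb_def s3 t1 t2
    using qinv[OF q]
    by (simp add: E_def Od_def algebra_simps qinv2[OF q] qinv3[OF q])
qed

lemma bb_0l: "bb q 0 j w = 0"
  by (simp add: bb_def PP_0_left PP_0_right)

lemma rev_lt: "(\<Sum>k<i. PP q Y (2*(i-1-k)+1) X (2*k+1) w) = (\<Sum>k<i. PP q Y (2*k+1) X (2*(i-1-k)+1) w)"
  by (rule sum.reindex_bij_witness[where i="\<lambda>k. i-1-k" and j="\<lambda>k. i-1-k"]) auto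

lemma bb_0r: "bb q i 0 w = 0"
  unfolding bb_def using rev_lt[of q i w]
  by (simp add: PP_0_left PP_0_right sum_subtractf)

lemma sum0: "(\<Sum>k\<le>(0::nat). F k) = F 0" by simp

lemma R1_0: assumes q: "q \<noteq> 0" shows "aa q 0 j (X#Y#w) = 0"
  unfolding aa_def sum0 XYoo_xy[of q 0 j w] YXoo_xy[OF q, of j 0 w]
    XYee_xy[of q "0+j+1-0" 0 w] XYee_xy[of q 0 "0+j+1-0" w]
  by (simp add: PP_0_left PP_0_right algebra_simps)

lemma R2_0: assumes q: "q \<noteq> 0" shows "aa q i 0 (Y#X#w) = 0"
proof -
  define E where "E p k = PP q X (2*p) Y (2*k) w" for p k
  define Od where "Od p k = PP q Y (2*p+1) X (2*k+1) w" for p k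
  define g where "g k = (if k = 0 then 0 - E 0 i else E (i+1-k) (k-1) + Od (i-k) (k-1) - Od (k-1) (i-k) - E k (i-k))" for k
  have f: "PP q X (2*(i+0+1-k)) Y (2*k) (Y#X#w) - PP q X (2*k) Y (2*(i+0+1-k)) (Y#X#w) = g k"
    if "k \<le> i" for k
    using that unfolding g_def XYee_yx[OF q, of "i+0+1-k" k w] XYee_yx[OF q, of k "i+0+1-k" w]
    by (auto simp: E_def Od_def Suc_diff_le)
  have r1: "(\<Sum>k<i. Od (i-1-k) k) = (\<Sum>k<i. Od k (i-1-k))"
    by (rule sum.reindex_bij_witness[where i="\<lambda>k. i-1-k" and j="\<lambda>k. i-1-k"]) auto
  have r2: "(\<Sum>k<i. E (Suc k) (i-1-k)) = (\<Sum>k<i. E (i-k) k)"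
    by (rule sum.reindex_bij_witness[where i="\<lambda>k. i-1-k" and j="\<lambda>k. i-1-k"]) auto
  have s1: "(\<Sum>k\<le>i. PP q X (2*(i+0+1-k)) Y (2*k) (Y#X#w) - PP q X (2*k) Y (2*(i+0+1-k)) (Y#X#w))
      = 0 - E 0 i"
  proof -
    have "(\<Sum>k\<le>i. PP q X (2*(i+0+1-k)) Y (2*k) (Y#X#w) - PP q X (2*k) Y (2*(i+0+1-k)) (Y#X#w))
       = (\<Sum>k\<le>i. g k)" by (intro sum.cong refl f) simp
    also have "\<dots> = g 0 + (\<Sum>k<i. g (Suc k))" by (rule sum.atMost_shift)
    also have "\<dots> = 0 - E 0 i + (\<Sum>k<i. E (i-k) k + Od (i-1-k) k - Od k (i-1-k) - E (Suc k) (i-1-k))"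
      by (auto simp: g_def Suc_diff_le intro!: sum.cong)
    also have "\<dots> = 0 - E 0 i"
      by (simp only: sum.distrib sum_subtractf r1 r2) simp
    finally show ?thesis .
  qed
  show ?thesis
    unfolding aa_def s1 XYoo_yx[OF q, of i 0 w] YXoo_yx[of q 0 i w]
    by (simp add: E_def PP_0_left PP_0_right algebra_simps)
qed

lemma aa_xx: "aa q i j (X#X#w) = 0" by (simp add: aa_def XY_xx YX_xx)
lemma aa_yy: "aa q i j (Y#Y#w) = 0" by (simp add: aa_def XY_yy YX_yy)
lemma bb_xx: "bb q i j (X#X#w) = 0" by (simp add: bb_def XY_xx YX_xx)
lemma bb_yy: "bb q i j (Y#Y#w) = 0" by (simp add: bb_def XY_yy YX_yy)

lemma PP_small: "length w < 2 \<Longrightarrow> 2 \<le> m + l \<Longrightarrow> PP q a m b l w = 0"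
  by (rule PP_len) simp

lemma aa_small: "length w < 2 \<Longrightarrow> aa q i j w = 0"
  unfolding aa_def by (subst (1 2 3 4) PP_small; simp)

lemma bb_small: "length w < 2 \<Longrightarrow> 0 < i \<Longrightarrow> 0 < j \<Longrightarrow> bb q i j w = 0"
  unfolding bb_def by (subst (1 2 3 4) PP_small; simp)

lemma main: assumes q: "q \<noteq> 0" shows "aa q i j w = 0 \<and> bb q i j w = 0"
proof (induction "length w" arbitrary: w i j rule: less_induct)
  case less
  show ?case
  proof (cases "length w < 2")
    case True
    have "aa q i j w = 0" using aa_small[OF True] .
    moreover have "bb q i j w = 0"
    proof (cases "i = 0 \<or> j = 0")
      case True then show ?thesis using bb_0l bb_0r by auto
    next
      case False then show ?thesis using bb_small[OF \<open>length w < 2\<close>, of i j q] by simp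
    qed
    ultimately show ?thesis by simp
  next
    case False
    then obtain c w1 where w1: "w = c # w1" by (cases w) auto
    with False obtain d w' where "w1 = d # w'" by (cases w1) auto
    with w1 have w: "w = c # d # w'" by simp
    have IH: "aa q i' j' w' = 0 \<and> bb q i' j' w' = 0" for i' j'
      using less(1)[of w' i' j'] w by simp
    show ?thesis
    proof (cases c; cases d)
      assume "c = X" "d = X" then show ?thesis using w by (simp add: aa_xx bb_xx)
    next
      assume "c = Y" "d = Y" then show ?thesis using w by (simp add: aa_yy bb_yy)
    next
      assume cd: "c = X" "d = Y"
      have "aa q i j w = 0"
      proof (cases i)
        case 0 then show ?thesis using w cd R1_0[OF q] by simp
      next
        case (Suc i') then show ?thesis using w cd R1[OF q, of i' j w'] IH by simp
      qed
      moreover have "bb q i j w = 0"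
      proof (cases "i = 0 \<or> j = 0")
        case True then show ?thesis using bb_0l bb_0r by auto
      next
        case False
        then obtain i' j' where "i = Suc i'" "j = Suc j'" by (cases i; cases j) auto
        then show ?thesis using w cd R3[OF q, of i' j' w'] IH by simp
      qed
      ultimately show ?thesis by simp
    next
      assume cd: "c = Y" "d = X"
      have "aa q i j w = 0"
      proof (cases j)
        case 0 then show ?thesis using w cd R2_0[OF q] by simp
      next
        case (Suc j') then show ?thesis using w cd R2[OF q, of i j' w'] IH by simp
      qed
      moreover have "bb q i j w = 0"
      proof (cases "i = 0 \<or> j = 0")
        case True then show ?thesis using bb_0l bb_0r by auto
      next
        case False
        then obtain i' j' where "i = Suc i'" "j = Suc j'" by (cases i; cases j) auto
        then show ?thesis using w cd R4[OF q, of i' j' w'] IH by simp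
      qed
      ultimately show ?thesis by simp
    qed
  qed
qed

lemma ip_fl[simp]: "ip (fl a) (fl b) = ip a b" by (cases a; cases b) auto
lemma fl_fl[simp]: "fl (fl a) = a" by (cases a) auto
lemma fl_eq_iff[simp]: "(fl a = fl b) = (a = b)" by (cases a; cases b) auto

lemma altw_fl: "altw (fl a) m = map fl (altw a m)"
  by (induction m arbitrary: a) (simp_all del: altw.simps(2) add: altw_Suc comp_def)

lemma basis_swap: "basis (map fl u) w = basis u (map fl w)"
proof -
  have "inj (map fl)" by (rule inj_mapI) (metis fl_fl injI)
  then show ?thesis unfolding basis_def by (metis (mono_tags, lifting) inj_eq list.map_comp list.map_id0 fl_fl comp_def id_def map_idI)
qed

lemma qsh_swap: "qsh q (map fl u) (map fl v) w = qsh q u v (map fl w)"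
proof (induction w arbitrary: u v)
  case Nil then show ?case by (simp add: qsh_Nil_w)
next
  case (Cons c w)
  have e: "((\<lambda>d. ip d (fl b)) \<circ> fl) = (\<lambda>d. ip d b)" for b
    by (auto simp: fun_eq_iff simp del: ip.simps)
  have c: "(c = fl a) = (fl c = a)" for a by (cases a; cases c) auto
  show ?case
    unfolding qsh_Cons list.map
    by (cases u; cases v) (simp_all del: qsh.simps ip.simps add: e c Cons.IH[symmetric] basis_swap)
qed

lemma sum_fun_apply: "(\<Sum>k\<in>K. f k) w = (\<Sum>k\<in>K. f k w)"
  by (induction K rule: infinite_finite_induct) auto

lemma A_fun: assumes q: "q \<noteq> 0" shows
  "qsh q (Wm i) (Wp j) = (\<lambda>w. qsh q (Wp j) (Wm i) w + (1 - q powi -2) *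
      (\<Sum>k\<le>i. qsh q (Gt (i+j+1-k)) (G k) w - qsh q (Gt k) (G (i+j+1-k)) w))"
  using main[OF q, of i j] unfolding aa_def PP_def Wm_def Wp_def Gt_def G_def
  by (auto simp: fun_eq_iff algebra_simps)

lemma A_rev: assumes q: "q \<noteq> 0" shows
  "qsh q (Wp j) (Wm i) = (\<lambda>w. qsh q (Wm i) (Wp j) w + (- (1 - q powi -2)) *
      (\<Sum>k\<le>i. qsh q (Gt (i+j+1-k)) (G k) w - qsh q (Gt k) (G (i+j+1-k)) w))"
  using main[OF q, of i j] unfolding aa_def PP_def Wm_def Wp_def Gt_def G_def
  by (auto simp: fun_eq_iff algebra_simps)

lemma B_fun: assumes q: "q \<noteq> 0" shows
  "qsh q (G i) (Gt j) = (\<lambda>w. qsh q (Gt j) (G i) w + (q^2 - 1) *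
      (\<Sum>k<i. qsh q (Wp (i+j-1-k)) (Wm k) w - qsh q (Wp k) (Wm (i+j-1-k)) w))"
  using main[OF q, of i j] unfolding bb_def PP_def Wm_def Wp_def Gt_def G_def
  by (auto simp: fun_eq_iff algebra_simps)

lemma sw_Wm: "map fl (Wm i) = Wp i" by (simp add: Wm_def Wp_def altw_fl[symmetric])
lemma sw_Wp: "map fl (Wp i) = Wm i" by (simp add: Wm_def Wp_def altw_fl[symmetric])
lemma sw_G: "map fl (G i) = Gt i" by (simp add: G_def Gt_def altw_fl[symmetric])
lemma sw_Gt: "map fl (Gt i) = G i" by (simp add: G_def Gt_def altw_fl[symmetric])

lemma swap_eq: "qsh q (map fl u) (map fl v) = (\<lambda>w. qsh q u v (map fl w))"
  by (simp add: fun_eq_iff qsh_swap)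

lemma sA_fun: assumes q: "q \<noteq> 0" shows
  "qsh q (Wp i) (Wm j) = (\<lambda>w. qsh q (Wm j) (Wp i) w + (1 - q powi -2) *
      (\<Sum>k\<le>i. qsh q (G (i+j+1-k)) (Gt k) w - qsh q (G k) (Gt (i+j+1-k)) w))"
proof -
  have "qsh q (Wp i) (Wm j) w = qsh q (Wm j) (Wp i) w + (1 - q powi -2) *
      (\<Sum>k\<le>i. qsh q (G (i+j+1-k)) (Gt k) w - qsh q (G k) (Gt (i+j+1-k)) w)" for w
    using fun_cong[OF A_fun[OF q, of i j], of "map fl w"]
    by (simp add: qsh_swap[symmetric] sw_Wm sw_Wp sw_G sw_Gt)
  then show ?thesis by (simp add: fun_eq_iff)
qed

lemma sA_rev: assumes q: "q \<noteq> 0" shows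
  "qsh q (Wm j) (Wp i) = (\<lambda>w. qsh q (Wp i) (Wm j) w + (- (1 - q powi -2)) *
      (\<Sum>k\<le>i. qsh q (G (i+j+1-k)) (Gt k) w - qsh q (G k) (Gt (i+j+1-k)) w))"
  using sA_fun[OF q, of i j] by (simp add: fun_eq_iff algebra_simps)

lemma sB_fun: assumes q: "q \<noteq> 0" shows
  "qsh q (Gt i) (G j) = (\<lambda>w. qsh q (G j) (Gt i) w + (q^2 - 1) *
      (\<Sum>k<i. qsh q (Wm (i+j-1-k)) (Wp k) w - qsh q (Wm k) (Wp (i+j-1-k)) w))"
proof -
  have "qsh q (Gt i) (G j) w = qsh q (G j) (Gt i) w + (q^2 - 1) *
      (\<Sum>k<i. qsh q (Wm (i+j-1-k)) (Wp k) w - qsh q (Wm k) (Wp (i+j-1-k)) w)" for w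
    using fun_cong[OF B_fun[OF q, of i j], of "map fl w"]
    by (simp add: qsh_swap[symmetric] sw_Wm sw_Wp sw_G sw_Gt)
  then show ?thesis by (simp add: fun_eq_iff)
qed

lemma modV: "module (\<lambda>(c::'k::field) (f::word \<Rightarrow> 'k) w. c * f w)"
  by unfold_locales (auto simp: fun_eq_iff algebra_simps)

lemma span_lin:
  fixes T :: "'k::field vec set"
  assumes "a \<in> vspan T" "finite K" "\<And>k. k \<in> K \<Longrightarrow> f k \<in> vspan T" "\<And>k. k \<in> K \<Longrightarrow> g k \<in> vspan T"
  shows "(\<lambda>w. a w + c * (\<Sum>k\<in>K. f k w - g k w)) \<in> vspan T"
proof -
  have eq: "(\<lambda>w. a w + c * (\<Sum>k\<in>K. f k w - g k w)) = a + (\<lambda>w. c * (\<Sum>k\<in>K. f k - g k) w)"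
    by (simp add: fun_eq_iff sum_fun_apply)
  have "(\<Sum>k\<in>K. f k - g k) \<in> vspan T"
    unfolding vspan_def
    by (rule module.span_sum[OF modV], rule module.span_diff[OF modV])
       (use assms in \<open>auto simp: vspan_def\<close>)
  then have "(\<lambda>w. c * (\<Sum>k\<in>K. f k - g k) w) \<in> vspan T"
    unfolding vspan_def by (rule module.span_scale[OF modV])
  then show ?thesis unfolding eq using assms(1) unfolding vspan_def
    by (rule module.span_add[OF modV, rotated])
qed

theorem proposition7p2:
  fixes q :: "'k::field" and n :: nat
  assumes "q \<noteq> 0" and "\<forall>m::nat. m > 0 \<longrightarrow> q ^ m \<noteq> 1" and "n \<ge> 1"
  defines "N \<equiv> {qsh q (Gt i) (G j) | i j. i + j = n}"
      and "S \<equiv> {qsh q (G i) (Gt j) | i j. i + j = n}"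
      and "E \<equiv> {qsh q (Wp i) (Wm j) | i j. i + j = n - 1}"
      and "W \<equiv> {qsh q (Wm i) (Wp j) | i j. i + j = n - 1}"
  shows "vspan (N \<union> E) = vspan (N \<union> W) \<and> vspan (N \<union> W) = vspan (S \<union> E)
         \<and> vspan (S \<union> E) = vspan (S \<union> W)"
proof -
  note q = assms(1)
  have n1: "1 \<le> n" by fact
  have mN: "qsh q (Gt a) (G b) \<in> N" if "a + b = n" for a b using that unfolding N_def by blast
  have mS: "qsh q (G a) (Gt b) \<in> S" if "a + b = n" for a b using that unfolding S_def by blast
  have mE: "qsh q (Wp a) (Wm b) \<in> E" if "a + b = n - 1" for a b using that unfolding E_def by blast
  have mW: "qsh q (Wm a) (Wp b) \<in> W" if "a + b = n - 1" for a b using that unfolding W_def by blast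
  have L1: "W \<subseteq> vspan U" if hN: "N \<subseteq> vspan U" and hE: "E \<subseteq> vspan U" for U
  proof
    fix x assume "x \<in> W"
    then obtain i j where x: "x = qsh q (Wm i) (Wp j)" and ij: "i + j = n - 1" unfolding W_def by blast
    show "x \<in> vspan U" unfolding x A_fun[OF q, of i j]
      apply (rule span_lin)
         apply (rule subsetD[OF hE], rule mE, insert ij n1, simp)
        apply simp
       apply (rule subsetD[OF hN], rule mN, insert ij n1, auto)
      apply (rule subsetD[OF hN], rule mN, insert ij n1, auto)
      done
  qed
  have L2: "E \<subseteq> vspan U" if hN: "N \<subseteq> vspan U" and hW: "W \<subseteq> vspan U" for U
  proof
    fix x assume "x \<in> E"
    then obtain i j where x: "x = qsh q (Wp j) (Wm i)" and ij: "j + i = n - 1" unfolding E_def by blast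
    show "x \<in> vspan U" unfolding x A_rev[OF q, where i=i and j=j]
      apply (rule span_lin)
         apply (rule subsetD[OF hW], rule mW, insert ij n1, simp)
        apply simp
       apply (rule subsetD[OF hN], rule mN, insert ij n1, auto)
      apply (rule subsetD[OF hN], rule mN, insert ij n1, auto)
      done
  qed
  have L3: "S \<subseteq> vspan U" if hN: "N \<subseteq> vspan U" and hE: "E \<subseteq> vspan U" for U
  proof
    fix x assume "x \<in> S"
    then obtain i j where x: "x = qsh q (G i) (Gt j)" and ij: "i + j = n" unfolding S_def by blast
    show "x \<in> vspan U" unfolding x B_fun[OF q, of i j]
      apply (rule span_lin)
         apply (rule subsetD[OF hN], rule mN, insert ij n1, simp)
        apply simp
       apply (rule subsetD[OF hE], rule mE, insert ij n1, auto)
      apply (rule subsetD[OF hE], rule mE, insert ij n1, auto)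
      done
  qed
  have L4: "W \<subseteq> vspan U" if hS: "S \<subseteq> vspan U" and hE: "E \<subseteq> vspan U" for U
  proof
    fix x assume "x \<in> W"
    then obtain i j where x: "x = qsh q (Wm j) (Wp i)" and ij: "j + i = n - 1" unfolding W_def by blast
    show "x \<in> vspan U" unfolding x sA_rev[OF q, where i=i and j=j]
      apply (rule span_lin)
         apply (rule subsetD[OF hE], rule mE, insert ij n1, simp)
        apply simp
       apply (rule subsetD[OF hS], rule mS, insert ij n1, auto)
      apply (rule subsetD[OF hS], rule mS, insert ij n1, auto)
      done
  qed
  have L5: "E \<subseteq> vspan U" if hS: "S \<subseteq> vspan U" and hW: "W \<subseteq> vspan U" for U
  proof
    fix x assume "x \<in> E"
    then obtain i j where x: "x = qsh q (Wp i) (Wm j)" and ij: "i + j = n - 1" unfolding E_def by blast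
    show "x \<in> vspan U" unfolding x sA_fun[OF q, of i j]
      apply (rule span_lin)
         apply (rule subsetD[OF hW], rule mW, insert ij n1, simp)
        apply simp
       apply (rule subsetD[OF hS], rule mS, insert ij n1, auto)
      apply (rule subsetD[OF hS], rule mS, insert ij n1, auto)
      done
  qed
  have L6: "N \<subseteq> vspan U" if hS: "S \<subseteq> vspan U" and hW: "W \<subseteq> vspan U" for U
  proof
    fix x assume "x \<in> N"
    then obtain i j where x: "x = qsh q (Gt i) (G j)" and ij: "i + j = n" unfolding N_def by blast
    show "x \<in> vspan U" unfolding x sB_fun[OF q, of i j]
      apply (rule span_lin)
         apply (rule subsetD[OF hS], rule mS, insert ij n1, simp)
        apply simp
       apply (rule subsetD[OF hW], rule mW, insert ij n1, auto)
      apply (rule subsetD[OF hW], rule mW, insert ij n1, auto)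
      done
  qed
  define T where "T = N \<union> S \<union> E \<union> W"
  have base: "A \<subseteq> vspan U" if "A \<subseteq> U" for A U :: "'k vec set"
    using that module.span_superset[OF modV, of U] unfolding vspan_def by blast
  have key: "vspan U = vspan T" if "U \<subseteq> T" "T \<subseteq> vspan U" for U
  proof -
    have "U \<subseteq> vspan T" by (rule base[OF that(1)])
    then show ?thesis using that(2) module.span_eq[OF modV, of U T] unfolding vspan_def by blast
  qed
  have NE: "vspan (N \<union> E) = vspan T"
  proof (rule key)
    have a: "N \<subseteq> vspan (N \<union> E)" "E \<subseteq> vspan (N \<union> E)" by (rule base, blast)+
    have b: "W \<subseteq> vspan (N \<union> E)" by (rule L1[OF a])
    have c: "S \<subseteq> vspan (N \<union> E)" by (rule L3[OF a])
    show "T \<subseteq> vspan (N \<union> E)" unfolding T_def using a b c by (intro Un_least)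
    show "N \<union> E \<subseteq> T" unfolding T_def by blast
  qed
  have NW: "vspan (N \<union> W) = vspan T"
  proof (rule key)
    have a: "N \<subseteq> vspan (N \<union> W)" "W \<subseteq> vspan (N \<union> W)" by (rule base, blast)+
    have b: "E \<subseteq> vspan (N \<union> W)" by (rule L2[OF a])
    have c: "S \<subseteq> vspan (N \<union> W)" by (rule L3[OF a(1) b])
    show "T \<subseteq> vspan (N \<union> W)" unfolding T_def using a b c by (intro Un_least)
    show "N \<union> W \<subseteq> T" unfolding T_def by blast
  qed
  have SE: "vspan (S \<union> E) = vspan T"
  proof (rule key)
    have a: "S \<subseteq> vspan (S \<union> E)" "E \<subseteq> vspan (S \<union> E)" by (rule base, blast)+
    have b: "W \<subseteq> vspan (S \<union> E)" by (rule L4[OF a])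
    have c: "N \<subseteq> vspan (S \<union> E)" by (rule L6[OF a(1) b])
    show "T \<subseteq> vspan (S \<union> E)" unfolding T_def using a b c by (intro Un_least)
    show "S \<union> E \<subseteq> T" unfolding T_def by blast
  qed
  have SW: "vspan (S \<union> W) = vspan T"
  proof (rule key)
    have a: "S \<subseteq> vspan (S \<union> W)" "W \<subseteq> vspan (S \<union> W)" by (rule base, blast)+
    have b: "E \<subseteq> vspan (S \<union> W)" by (rule L5[OF a])
    have c: "N \<subseteq> vspan (S \<union> W)" by (rule L6[OF a])
    show "T \<subseteq> vspan (S \<union> W)" unfolding T_def using a b c by (intro Un_least)
    show "S \<union> W \<subseteq> T" unfolding T_def by blast
  qed
  show ?thesis using NE NW SE SW by simp
qed


end
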